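(* Let $G=(V,E)$ be a finite strongly connected directed graph, let $\mathcal H=\mathbb C^{V}$ with orthonormal basis $\{|v\rangle : v\in V\}$, and let $\mathcal L=\{L_{(v,w)}=c_{(v,w)}|w\rangle\langle v| : (v,w)\in E\}$ for arbitrary nonzero constants $c_{(v,w)}\in\mathbb C\setminus\{0\}$. Then for an arbitrary Hermitian operator $H$ on $\mathcal H$, the GKSL evolution $$\frac{d}{dt}\varrho=\mathcal M[\varrho]=-\mathrm i[H,\varrho]+\sum_{L\in\mathcal L}\Big(L\varrho L^\dagger-\tfrac12\{L^\dagger L,\varrho\}\Big)$$ is relaxing, and its unique stationary state has full rank.
   Context: A density matrix $\varrho$ is a stationary state if $\mathcal M[\varrho]=0$. The evolution is called relaxing if it has a unique stationary state (density matrix). $\{A,B\}=AB+BA$ is the anticommutator. A digraph is strongly connected if for any $v,w\in V$ there is a directed path from $v$ to $w$. *)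

theory Defs
  imports "HOL-Analysis.Analysis"
begin

text \<open>Operators on H = C^V are matrices complex^'v^'v indexed by the finite vertex type 'v;
  the basis vector |v> is the standard basis vector at v.\<close>

definition adj :: "complex^'v^'v \<Rightarrow> complex^'v^'v" where
  "adj A = (\<chi> i j. cnj (A $ j $ i))"

definition hermitian :: "complex^'v^'v \<Rightarrow> bool" where
  "hermitian A \<longleftrightarrow> adj A = A"

definition positive_semidef :: "complex^'v::finite^'v \<Rightarrow> bool" where
  "positive_semidef A \<longleftrightarrow> hermitian A \<and>
     (\<forall>x::complex^'v. 0 \<le> Re (\<Sum>i\<in>UNIV. \<Sum>j\<in>UNIV. cnj (x $ i) * A $ i $ j * x $ j))"

definition density_matrix :: "complex^'v::finite^'v \<Rightarrow> bool" where
  "density_matrix \<rho> \<longleftrightarrow> positive_semidef \<rho> \<and> trace \<rho> = 1"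

definition ketbra :: "'v \<Rightarrow> 'v \<Rightarrow> complex^'v^'v" where
  "ketbra w v = (\<chi> i j. if i = w \<and> j = v then 1 else 0)"

definition mscale :: "complex \<Rightarrow> complex^'v^'v \<Rightarrow> complex^'v^'v" where
  "mscale a A = (\<chi> i j. a * A $ i $ j)"

definition commutator :: "complex^'v::finite^'v \<Rightarrow> complex^'v^'v \<Rightarrow> complex^'v^'v" where
  "commutator A B = A ** B - B ** A"

definition anticommutator :: "complex^'v::finite^'v \<Rightarrow> complex^'v^'v \<Rightarrow> complex^'v^'v" where
  "anticommutator A B = A ** B + B ** A"

definition gksl :: "complex^'v::finite^'v \<Rightarrow> 'i set \<Rightarrow> ('i \<Rightarrow> complex^'v^'v)
                     \<Rightarrow> complex^'v^'v \<Rightarrow> complex^'v^'v" where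
  "gksl H I Ls \<rho> = mscale (- \<i>) (commutator H \<rho>) +
     (\<Sum>k\<in>I. Ls k ** \<rho> ** adj (Ls k) - mscale (1/2) (anticommutator (adj (Ls k) ** Ls k) \<rho>))"

definition strongly_connected :: "('v \<times> 'v) set \<Rightarrow> bool" where
  "strongly_connected E \<longleftrightarrow> (\<forall>v w. (v, w) \<in> E\<^sup>*)"

end

theory Submission
  imports Defs
begin


definition cinner :: "complex^'v::finite \<Rightarrow> complex^'v \<Rightarrow> complex" where
  "cinner x y = (\<Sum>i\<in>UNIV. cnj (x$i) * y$i)"

definition qf :: "complex^'v::finite^'v \<Rightarrow> complex^'v \<Rightarrow> complex" where
  "qf A x = cinner x (A *v x)"

lemma qf_sum: "(\<Sum>i\<in>UNIV. \<Sum>j\<in>UNIV. cnj (x $ i) * A $ i $ j * x $ j) = qf A x"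
  by (simp add: qf_def cinner_def matrix_vector_mult_def sum_distrib_left mult.assoc)

lemma psd_iff: "positive_semidef A \<longleftrightarrow> hermitian A \<and> (\<forall>x. 0 \<le> Re (qf A x))"
  unfolding positive_semidef_def qf_sum ..

lemma cinner_adj: "cinner x (A *v y) = cinner (adj A *v x) y"
  unfolding cinner_def matrix_vector_mult_def adj_def
  by (simp add: sum_distrib_left sum_distrib_right mult_ac) (rule sum.swap)

lemma cnj_cinner: "cnj (cinner x y) = cinner y x"
  by (simp add: cinner_def mult.commute)

lemma cinner_add_right: "cinner x (y + z) = cinner x y + cinner x z"
  by (simp add: cinner_def distrib_left sum.distrib)
lemma cinner_diff_right: "cinner x (y - z) = cinner x y - cinner x z"
  by (simp add: cinner_def right_diff_distrib sum_subtractf)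
lemma cinner_add_left: "cinner (x + y) z = cinner x z + cinner y z"
  by (simp add: cinner_def distrib_right sum.distrib)
lemma cinner_scale_right: "cinner x (a *s y) = a * cinner x y"
  by (simp add: cinner_def sum_distrib_left mult_ac)
lemma cinner_scale_left: "cinner (a *s x) y = cnj a * cinner x y"
  by (simp add: cinner_def sum_distrib_left mult_ac)
lemma cinner_zero_right[simp]: "cinner x 0 = 0"
  by (simp add: cinner_def)
lemma cinner_zero_left[simp]: "cinner 0 x = 0"
  by (simp add: cinner_def)
lemma cinner_minus_right: "cinner x (- y) = - cinner x y"
  by (simp add: cinner_def sum_negf)

lemma herm_entry: "hermitian A \<Longrightarrow> cnj (A $ i $ j) = A $ j $ i"
  unfolding hermitian_def adj_def by (metis vec_lambda_beta)

lemma herm_adj_mv: "hermitian A \<Longrightarrow> adj A *v x = A *v x"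
  unfolding hermitian_def by simp

lemma cinner_herm: "hermitian A \<Longrightarrow> cinner x (A *v y) = cinner (A *v x) y"
  using cinner_adj herm_adj_mv by metis

lemma qf_herm_real: "hermitian A \<Longrightarrow> cnj (qf A x) = qf A x"
  unfolding qf_def by (metis cinner_herm cnj_cinner)

lemma qf_herm_of_real: "hermitian A \<Longrightarrow> qf A x = of_real (Re (qf A x))"
  using qf_herm_real by (metis Reals_cnj_iff complex_is_Real_iff of_real_Re)

lemma cinner_self: "cinner x x = of_real (\<Sum>i\<in>UNIV. (cmod (x$i))^2)"
  unfolding cinner_def of_real_sum
  by (rule sum.cong) (simp_all add: complex_norm_square mult.commute del: of_real_power)

lemma norm_sq_vec: "(norm (x::complex^'v::finite))^2 = (\<Sum>i\<in>UNIV. (cmod (x$i))^2)"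
  by (simp add: norm_vec_def L2_set_def sum_nonneg)

lemma cinner_self_zero: "cinner x x = 0 \<Longrightarrow> x = 0"
proof -
  assume "cinner x x = 0"
  then have "(\<Sum>i\<in>UNIV. (cmod (x$i))^2) = 0" unfolding cinner_self of_real_eq_0_iff .
  then have "\<forall>i\<in>UNIV. (cmod (x$i))^2 = 0" by (subst sum_nonneg_eq_0_iff[symmetric]) auto
  then show "x = 0" by (simp add: vec_eq_iff)
qed

lemma mv_scale: "(A::complex^'v::finite^'v) *v (a *s x) = a *s (A *v x)"
  by (rule vector_scalar_commute)

lemma mscale_mv: "mscale a A *v x = a *s (A *v x)"
  by (simp add: mscale_def matrix_vector_mult_def vector_scalar_mult_def vec_eq_iff sum_distrib_left mult.assoc)

lemma commutator_mv: "commutator A B *v x = A *v (B *v x) - B *v (A *v x)"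
  by (simp add: commutator_def matrix_vector_mul_assoc algebra_simps)

lemma anticommutator_mv: "anticommutator A B *v x = A *v (B *v x) + B *v (A *v x)"
  by (simp add: anticommutator_def matrix_vector_mul_assoc algebra_simps)


lemma adj_diff: "adj (A - B) = adj A - adj B"
  by (simp add: adj_def vec_eq_iff)
lemma adj_add: "adj (A + B) = adj A + adj B"
  by (simp add: adj_def vec_eq_iff)
lemma adj_mscale: "adj (mscale a A) = mscale (cnj a) (adj A)"
  by (simp add: adj_def mscale_def vec_eq_iff)
lemma adj_mat1: "adj (mat 1 :: complex^'v::finite^'v) = mat 1"
  by (simp add: adj_def mat_def vec_eq_iff)
lemma adj_adj: "adj (adj A) = A"
  by (simp add: adj_def vec_eq_iff)

lemma psd_null:
  assumes "positive_semidef A" "qf A x = 0"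
  shows "A *v x = 0"
proof -
  have h: "hermitian A" and nn: "\<And>z. 0 \<le> Re (qf A z)" using assms(1) psd_iff by auto
  define y where "y = A *v x"
  define a where "a = Re (cinner y y)"
  define B where "B = Re (qf A y)"
  have B0: "B \<ge> 0" using nn B_def by simp
  have a0: "a \<ge> 0" unfolding a_def cinner_self by (simp add: sum_nonneg)
  have c1: "cinner x (A *v y) = cinner y y" using cinner_herm[OF h] y_def by metis
  have c2: "cinner y (A *v x) = cinner y y" using y_def by simp
  have expand: "Re (qf A (x + of_real t *s y)) = 2*t*a + t^2 * B" for t :: real
  proof -
    have "qf A (x + of_real t *s y) = qf A x + of_real t * cinner x (A *v y) + of_real t * cinner y (A *v x)
        + of_real t * of_real t * qf A y"
      by (simp add: qf_def matrix_vector_right_distrib mv_scale cinner_add_left cinner_add_right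
          cinner_scale_left cinner_scale_right algebra_simps)
    then show ?thesis using assms(2) c1 c2 by (simp add: a_def B_def power2_eq_square)
  qed
  have "a = 0"
  proof (rule ccontr)
    assume "a \<noteq> 0"
    then have apos: "a > 0" using a0 by simp
    define d where "d = B + 1"
    have dpos: "d > 0" using B0 d_def by simp
    define t where "t = - a / d"
    have e1: "2*t*a + t^2 * B = a^2 * (B - 2*d) / d^2"
      using dpos by (simp add: t_def field_simps power2_eq_square)
    have e2: "B - 2*d = -B-2" using d_def by simp
    have neg: "a^2 * (-B-2) / d^2 < 0"
    proof -
      have a2: "a^2 > 0" using apos by simp
      have ng: "-B-2 < 0" using B0 by simp
      have "d^2 > 0" using dpos by simp
      then show ?thesis using mult_pos_neg[OF a2 ng] B0 by (simp add: divide_neg_pos)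
    qed
    have "2*t*a + t^2 * B < 0" using e1 e2 neg by simp
    then show False using nn[of "x + of_real t *s y"] expand[of t] by simp
  qed
  then have "cinner y y = 0" unfolding a_def cinner_self by simp
  then show ?thesis using cinner_self_zero y_def by blast
qed

lemma mv_axis: "(A *v axis v 1) $ i = A $ i $ v"
proof -
  have "(\<Sum>j\<in>UNIV. A$i$j * (if j = v then 1 else 0)) = (\<Sum>j\<in>UNIV. if j = v then A$i$j else 0)"
    by (rule sum.cong) auto
  moreover have "(A *v axis v 1) $ i = (\<Sum>j\<in>UNIV. A$i$j * (if j = v then 1 else 0))"
    by (simp add: matrix_vector_mult_def axis_def)
  ultimately show ?thesis by simp
qed

lemma qf_axis: "qf A (axis v 1) = A $ v $ v"
proof -
  have "qf A (axis v 1) = (\<Sum>i\<in>UNIV. if i = v then A $ i $ v else 0)"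
    unfolding qf_def cinner_def mv_axis by (rule sum.cong) (auto simp: axis_def)
  then show ?thesis by simp
qed

lemma psd_diag:
  assumes "positive_semidef A"
  shows "A $ v $ v = of_real (Re (A $ v $ v))" "Re (A $ v $ v) \<ge> 0"
proof -
  have h: "hermitian A" using assms psd_iff by auto
  show "A $ v $ v = of_real (Re (A $ v $ v))" using qf_herm_of_real[OF h, of "axis v 1"] qf_axis by metis
  show "Re (A $ v $ v) \<ge> 0" using assms psd_iff qf_axis by metis
qed

lemma psd_diag_zero:
  assumes "positive_semidef A" "A $ v $ v = 0"
  shows "A $ j $ v = 0" "A $ v $ j = 0"
proof -
  have h: "hermitian A" using assms psd_iff by auto
  have "A *v axis v 1 = 0" using psd_null[OF assms(1)] qf_axis assms(2) by metis
  then show a: "A $ j $ v = 0" using mv_axis by (metis zero_index)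
  show "A $ v $ j = 0" using herm_entry[OF h, of j v] a by simp
qed

lemma psd_zero_diag:
  assumes "positive_semidef A" "\<forall>v. A $ v $ v = 0"
  shows "A = 0"
  using psd_diag_zero(1)[OF assms(1)] assms(2) by (simp add: vec_eq_iff)

lemma qf_scale: "qf X (a *s z) = cnj a * a * qf X z"
  by (simp add: qf_def mv_scale cinner_scale_left cinner_scale_right)

lemma ofreal_scale_eq: "((of_real r :: complex) *s (z::complex^'v::finite)) = r *\<^sub>R z"
unfolding vec_eq_iff proof
  fix i
  have "(r *\<^sub>R z)$i = r *\<^sub>R (z$i)" by simp
  also have "\<dots> = of_real r * z$i" by (simp add: scaleR_conv_of_real)
  finally have "(r *\<^sub>R z)$i = of_real r * z$i" .
  then show "((of_real r :: complex) *s z) $ i = (r *\<^sub>R z) $ i" by simp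
qed

lemma min_eig:
  assumes "hermitian X" "\<not> positive_semidef X"
  obtains x \<mu> where "x \<noteq> 0" "\<mu> < 0" "X *v x = of_real \<mu> *s x"
proof -
  from assms obtain y where y: "Re (qf X y) < 0" by (auto simp: psd_iff not_le)
  define f where "f = (\<lambda>x. Re (qf X x))"
  have f_alt: "f = (\<lambda>x. Re (\<Sum>i\<in>UNIV. \<Sum>j\<in>UNIV. cnj (x $ i) * X $ i $ j * x $ j))"
    unfolding f_def qf_sum ..
  have cont: "continuous_on (sphere 0 1) f"
    unfolding f_alt by (intro continuous_intros)
  have fscale: "f (of_real r *s z) = r^2 * f z" for r z
    by (simp add: f_def qf_scale power2_eq_square)
  have fnorm: "of_real (1 / norm z) *s z \<in> sphere 0 1" if "z \<noteq> 0" for z :: "complex^'v"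
    using that unfolding ofreal_scale_eq by simp
  have f0: "f 0 = 0" by (simp add: f_def qf_def)
  have yne: "y \<noteq> 0" using y f0 f_def by auto
  have ne: "sphere (0::complex^'v) 1 \<noteq> {}" using fnorm[OF yne] by auto
  obtain x0 where x0: "x0 \<in> sphere 0 1" "\<forall>z\<in>sphere 0 1. f x0 \<le> f z"
    using continuous_attains_inf[OF compact_sphere ne cont] by blast
  define \<mu> where "\<mu> = f x0"
  have "\<mu> \<le> f (of_real (1 / norm y) *s y)" using x0 fnorm[OF yne] \<mu>_def by blast
  also have "\<dots> = f y / (norm y)^2" by (subst fscale) (simp add: power_divide)
  also have "\<dots> < 0" using y f_def yne by (simp add: divide_neg_pos)
  finally have mneg: "\<mu> < 0" .
  have lower: "f z \<ge> \<mu> * (norm z)^2" for z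
  proof (cases "z = 0")
    case True then show ?thesis using f0 by simp
  next
    case False
    have "\<mu> \<le> f (of_real (1 / norm z) *s z)" using x0 fnorm[OF False] \<mu>_def by blast
    also have "\<dots> = f z / (norm z)^2" by (subst fscale) (simp add: power_divide)
    finally show ?thesis using False by (simp add: field_simps)
  qed
  define Y where "Y = X - mscale (of_real \<mu>) (mat 1)"
  have hY: "hermitian Y" using assms(1)
    by (simp add: Y_def hermitian_def adj_diff adj_mscale adj_mat1)
  have qY: "qf Y z = qf X z - of_real \<mu> * cinner z z" for z
    by (simp add: Y_def qf_def matrix_vector_mult_diff_rdistrib mscale_mv cinner_diff_right cinner_scale_right)
  have ReY: "Re (qf Y z) = f z - \<mu> * (norm z)^2" for z
    by (simp add: qY f_def cinner_self norm_sq_vec)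
  have pY: "positive_semidef Y" unfolding psd_iff using hY by (metis ReY lower diff_ge_0_iff_ge)
  have n1: "norm x0 = 1" using x0 by simp
  have "Re (qf Y x0) = 0" using ReY \<mu>_def n1 by simp
  then have "qf Y x0 = 0" using qf_herm_of_real[OF hY, of x0] by simp
  then have "Y *v x0 = 0" using psd_null[OF pY] by simp
  then have "X *v x0 = of_real \<mu> *s x0"
    by (simp add: Y_def matrix_vector_mult_diff_rdistrib mscale_mv)
  moreover have "x0 \<noteq> 0" using n1 by auto
  ultimately show ?thesis using that mneg by blast
qed


definition gam :: "('v::finite \<times> 'v) set \<Rightarrow> ('v \<times> 'v \<Rightarrow> complex) \<Rightarrow> 'v \<Rightarrow> real" where
  "gam E c v = (\<Sum>e\<in>{e\<in>E. fst e = v}. (cmod (c e))^2)"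

definition Gam :: "('v::finite \<times> 'v) set \<Rightarrow> ('v \<times> 'v \<Rightarrow> complex) \<Rightarrow> complex^'v^'v" where
  "Gam E c = (\<chi> i j. if i = j then complex_of_real (gam E c i) else 0)"

definition dvec :: "('v::finite \<times> 'v) set \<Rightarrow> ('v \<times> 'v \<Rightarrow> complex) \<Rightarrow> ('v \<Rightarrow> complex) \<Rightarrow> complex^'v^'v" where
  "dvec E c q = (\<chi> i j. if i = j then (\<Sum>e\<in>{e\<in>E. snd e = i}. of_real ((cmod (c e))^2) * q (fst e)) else 0)"

definition sylv :: "complex^'v::finite^'v \<Rightarrow> ('v \<times> 'v) set \<Rightarrow> ('v \<times> 'v \<Rightarrow> complex) \<Rightarrow> complex^'v^'v \<Rightarrow> complex^'v^'v" where
  "sylv H E c X = mscale (-\<i>) (commutator H X) - mscale (1/2) (anticommutator (Gam E c) X)"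

definition diagf :: "complex^'v::finite^'v \<Rightarrow> 'v \<Rightarrow> complex" where
  "diagf X = (\<lambda>v. X$v$v)"

lemma S1[simp]: "(\<Sum>k\<in>(UNIV::'v::finite set). (if k = a then f k else 0) * g k) = f a * (g a :: 'b::semiring_0)"
proof -
  have "(\<Sum>k\<in>(UNIV::'v set). (if k = a then f k else 0) * g k) = (\<Sum>k\<in>UNIV. if k = a then f k * g k else 0)"
    by (rule sum.cong) auto
  then show ?thesis by simp
qed
lemma S2[simp]: "(\<Sum>k\<in>(UNIV::'v::finite set). (if a = k then f k else 0) * g k) = f a * (g a :: 'b::semiring_0)"
proof -
  have "(\<Sum>k\<in>(UNIV::'v set). (if a = k then f k else 0) * g k) = (\<Sum>k\<in>UNIV. if k = a then f k * g k else 0)"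
    by (rule sum.cong) auto
  then show ?thesis by simp
qed
lemma S3[simp]: "(\<Sum>k\<in>(UNIV::'v::finite set). g k * (if k = a then f k else 0)) = g a * (f a :: 'b::semiring_0)"
proof -
  have "(\<Sum>k\<in>(UNIV::'v set). g k * (if k = a then f k else 0)) = (\<Sum>k\<in>UNIV. if k = a then g k * f k else 0)"
    by (rule sum.cong) auto
  then show ?thesis by simp
qed
lemma S4[simp]: "(\<Sum>k\<in>(UNIV::'v::finite set). g k * (if a = k then f k else 0)) = g a * (f a :: 'b::semiring_0)"
proof -
  have "(\<Sum>k\<in>(UNIV::'v set). g k * (if a = k then f k else 0)) = (\<Sum>k\<in>UNIV. if k = a then g k * f k else 0)"
    by (rule sum.cong) auto
  then show ?thesis by simp
qed
lemma mult_if0_l[simp]: "(if P then x else 0) * (y::'b::semiring_0) = (if P then x * y else 0)"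
  by simp
lemma mult_if0_r[simp]: "(y::'b::semiring_0) * (if P then x else 0) = (if P then y * x else 0)"
  by simp
lemma SC1[simp]: "(\<Sum>k\<in>(UNIV::'v::finite set). if k = a \<and> P then f k else 0) = (if P then f a else (0::'b::comm_monoid_add))"
  by (cases P) simp_all
lemma SC2[simp]: "(\<Sum>k\<in>(UNIV::'v::finite set). if P \<and> k = a then f k else 0) = (if P then f a else (0::'b::comm_monoid_add))"
  by (cases P) simp_all
lemma sum_if_const[simp]: "(\<Sum>k\<in>A. if P then f k else 0) = (if P then (\<Sum>k\<in>A. f k) else (0::'b::comm_monoid_add))"
  by (cases P) simp_all
lemma cnj_if0[simp]: "cnj (if P then x else 0) = (if P then cnj x else 0)"
  by simp

lemma Gam_mult_entry: "(Gam E c ** X) $ i $ j = of_real (gam E c i) * X $ i $ j"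
  by (simp add: matrix_matrix_mult_def Gam_def)

lemma mult_Gam_entry: "(X ** Gam E c) $ i $ j = X $ i $ j * of_real (gam E c j)"
  by (simp add: matrix_matrix_mult_def Gam_def)

lemma sylv_entry: "sylv H E c X $ i $ j = -\<i> * ((\<Sum>k\<in>UNIV. H$i$k * X$k$j) - (\<Sum>k\<in>UNIV. X$i$k * H$k$j))
   - (of_real (gam E c i) + of_real (gam E c j)) / 2 * X$i$j"
  by (simp add: sylv_def mscale_def commutator_def anticommutator_def Gam_mult_entry mult_Gam_entry
      matrix_matrix_mult_def[of H] matrix_matrix_mult_def[of X H] algebra_simps)

lemma dvec_entry: "dvec E c q $ i $ j = (if i = j then (\<Sum>e\<in>{e\<in>E. snd e = i}. of_real ((cmod (c e))^2) * q (fst e)) else 0)"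
  by (simp add: dvec_def)

lemma L_case: "(\<lambda>(v, w). mscale (c (v, w)) (ketbra w v)) e = mscale (c e) (ketbra (snd e) (fst e))"
  by (cases e) simp

lemma ketbra_entry: "mscale a (ketbra w v) $ i $ j = (if i = w \<and> j = v then a else 0)"
  by (simp add: mscale_def ketbra_def)

lemma LX_entry: "(mscale a (ketbra w v) ** X) $ i $ k = (if i = w then a * X$v$k else 0)"
  by (simp add: matrix_matrix_mult_def ketbra_entry)

lemma LXL_entry: "(mscale a (ketbra w v) ** X ** adj (mscale a (ketbra w v))) $ i $ j
   = (if i = w \<and> j = w then of_real ((cmod a)^2) * X$v$v else 0)"
  unfolding matrix_matrix_mult_def[of "mscale a (ketbra w v) ** X"] LX_entry
  by (simp add: adj_def ketbra_entry complex_norm_square mult_ac del: of_real_power)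

lemma LL_entry: "(adj (mscale a (ketbra w v)) ** mscale a (ketbra w v)) $ i $ j
   = (if i = v \<and> j = v then of_real ((cmod a)^2) else 0)"
  unfolding matrix_matrix_mult_def
  by (simp add: adj_def ketbra_entry complex_norm_square mult_ac del: of_real_power)

lemma anti_LL_entry: "(anticommutator (adj (mscale a (ketbra w v)) ** mscale a (ketbra w v)) X) $ i $ j
   = (if i = v then of_real ((cmod a)^2) * X$v$j else 0) + (if j = v then X$i$v * of_real ((cmod a)^2) else 0)"
  unfolding anticommutator_def vector_add_component matrix_matrix_mult_def[of "adj (mscale a (ketbra w v)) ** mscale a (ketbra w v)"]
     matrix_matrix_mult_def[of X] LL_entry
  by (simp del: of_real_power)


lemma finE[simp]: "finite (E::('v::finite \<times> 'v) set)"
  by simp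

lemma sumA: "(\<Sum>e\<in>E. if i = snd e \<and> j = snd e then f e else 0) = (if i = j then (\<Sum>e\<in>{e\<in>E. snd e = i}. f e) else (0::complex))"
  for E :: "('v::finite \<times> 'v) set"
proof (cases "i = j")
  case True
  then show ?thesis by (simp add: sum.inter_filter eq_commute)
next
  case False
  then show ?thesis by (auto intro!: sum.neutral)
qed

lemma sumB: "(\<Sum>e\<in>E. if i = fst e then of_real ((cmod (c e))^2) * X$(fst e)$j else 0) = of_real (gam E c i) * X$i$j"
  for E :: "('v::finite \<times> 'v) set"
proof -
  have "(\<Sum>e\<in>E. if i = fst e then of_real ((cmod (c e))^2) * X$(fst e)$j else 0)
      = (\<Sum>e\<in>{e\<in>E. fst e = i}. of_real ((cmod (c e))^2) * X$(fst e)$j)"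
    by (simp add: sum.inter_filter eq_commute del: of_real_power)
  also have "\<dots> = (\<Sum>e\<in>{e\<in>E. fst e = i}. of_real ((cmod (c e))^2) * X$i$j)"
    by (rule sum.cong) auto
  also have "\<dots> = of_real (gam E c i) * X$i$j"
    by (simp add: gam_def sum_distrib_right del: of_real_power)
  finally show ?thesis .
qed


lemma sumC: "(\<Sum>e\<in>E. if j = fst e then X$i$(fst e) * of_real ((cmod (c e))^2) else 0) = X$i$j * of_real (gam E c j)"
  for E :: "('v::finite \<times> 'v) set"
proof -
  have "(\<Sum>e\<in>E. if j = fst e then X$i$(fst e) * of_real ((cmod (c e))^2) else 0)
      = (\<Sum>e\<in>{e\<in>E. fst e = j}. X$i$(fst e) * of_real ((cmod (c e))^2))"
    by (simp add: sum.inter_filter eq_commute del: of_real_power)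
  also have "\<dots> = (\<Sum>e\<in>{e\<in>E. fst e = j}. X$i$j * of_real ((cmod (c e))^2))"
    by (rule sum.cong) auto
  also have "\<dots> = X$i$j * of_real (gam E c j)"
    by (simp add: gam_def sum_distrib_left del: of_real_power)
  finally show ?thesis .
qed

lemma mscale_entry: "mscale a A $ i $ j = a * A $ i $ j"
  by (simp add: mscale_def)

lemma term_entry:
  "((\<lambda>(v, w). mscale (c (v, w)) (ketbra w v)) e ** X ** adj ((\<lambda>(v, w). mscale (c (v, w)) (ketbra w v)) e)
    - mscale (1/2) (anticommutator (adj ((\<lambda>(v, w). mscale (c (v, w)) (ketbra w v)) e) ** (\<lambda>(v, w). mscale (c (v, w)) (ketbra w v)) e) X)) $ i $ j
   = (if i = snd e \<and> j = snd e then of_real ((cmod (c e))^2) * X$(fst e)$(fst e) else 0)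
     - 1/2 * ((if i = fst e then of_real ((cmod (c e))^2) * X$(fst e)$j else 0)
              + (if j = fst e then X$i$(fst e) * of_real ((cmod (c e))^2) else 0))"
  unfolding L_case vector_minus_component LXL_entry mscale_entry[of "1/2"] anti_LL_entry ..

lemma gksl_decomp:
  "gksl H E (\<lambda>(v, w). mscale (c (v, w)) (ketbra w v)) X = sylv H E c X + dvec E c (diagf X)"
  for E :: "('v::finite \<times> 'v) set"
proof -
  have "gksl H E (\<lambda>(v, w). mscale (c (v, w)) (ketbra w v)) X $ i $ j = (sylv H E c X + dvec E c (diagf X)) $ i $ j" for i j
  proof -
    have "gksl H E (\<lambda>(v, w). mscale (c (v, w)) (ketbra w v)) X $ i $ j
      = mscale (- \<i>) (commutator H X) $ i $ j +
        ((\<Sum>e\<in>E. if i = snd e \<and> j = snd e then of_real ((cmod (c e))^2) * X$(fst e)$(fst e) else 0)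
         - 1/2 * ((\<Sum>e\<in>E. if i = fst e then of_real ((cmod (c e))^2) * X$(fst e)$j else 0)
                + (\<Sum>e\<in>E. if j = fst e then X$i$(fst e) * of_real ((cmod (c e))^2) else 0)))"
      unfolding gksl_def vector_add_component sum_component term_entry
      by (simp only: sum_subtractf sum_distrib_left[symmetric] sum.distrib)
    also have "\<dots> = (sylv H E c X + dvec E c (diagf X)) $ i $ j"
      unfolding sumA sumB sumC
      by (simp add: sylv_def dvec_def diagf_def anticommutator_def Gam_mult_entry mult_Gam_entry
          mscale_def algebra_simps del: of_real_power)
    finally show ?thesis .
  qed
  then show ?thesis by (simp add: vec_eq_iff)
qed


definition G :: "complex^'v::finite^'v \<Rightarrow> ('v \<times> 'v) set \<Rightarrow> ('v \<times> 'v \<Rightarrow> complex) \<Rightarrow> complex^'v^'v \<Rightarrow> complex^'v^'v" where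
  "G H E c X = sylv H E c X + dvec E c (diagf X)"

lemma sylv_add: "sylv H E c (X + Y) = sylv H E c X + sylv H E c Y"
  by (simp add: vec_eq_iff sylv_entry sum.distrib field_simps)
lemma sylv_diff: "sylv H E c (X - Y) = sylv H E c X - sylv H E c Y"
  by (simp add: vec_eq_iff sylv_entry sum_subtractf field_simps)
lemma sylv_mscale: "sylv H E c (mscale a X) = mscale a (sylv H E c X)"
  by (simp add: vec_eq_iff sylv_entry mscale_entry algebra_simps sum_distrib_left)
lemma sylv_uminus: "sylv H E c (- X) = - sylv H E c X"
  by (simp add: vec_eq_iff sylv_entry sum_negf field_simps)

lemma dvec_add: "dvec E c (\<lambda>v. q v + r v) = dvec E c q + dvec E c r"
  by (simp add: vec_eq_iff dvec_entry algebra_simps sum.distrib)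
lemma dvec_diff: "dvec E c (\<lambda>v. q v - r v) = dvec E c q - dvec E c r"
  by (simp add: vec_eq_iff dvec_entry algebra_simps sum_subtractf)
lemma dvec_mscale: "dvec E c (\<lambda>v. a * q v) = mscale a (dvec E c q)"
  by (simp add: vec_eq_iff dvec_entry mscale_entry algebra_simps sum_distrib_left)
lemma dvec_uminus: "dvec E c (\<lambda>v. - q v) = - dvec E c q"
  by (simp add: vec_eq_iff dvec_entry algebra_simps sum_negf)

lemma diagf_add: "diagf (X + Y) = (\<lambda>v. diagf X v + diagf Y v)" by (simp add: diagf_def)
lemma diagf_diff: "diagf (X - Y) = (\<lambda>v. diagf X v - diagf Y v)" by (simp add: diagf_def)
lemma diagf_mscale: "diagf (mscale a X) = (\<lambda>v. a * diagf X v)" by (simp add: diagf_def mscale_entry)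
lemma diagf_uminus: "diagf (- X) = (\<lambda>v. - diagf X v)" by (simp add: diagf_def)

lemma G_add: "G H E c (X + Y) = G H E c X + G H E c Y"
  by (simp add: G_def sylv_add diagf_add dvec_add)
lemma G_diff: "G H E c (X - Y) = G H E c X - G H E c Y"
  by (simp add: G_def sylv_diff diagf_diff dvec_diff)
lemma G_mscale: "G H E c (mscale a X) = mscale a (G H E c X)"
  by (simp add: G_def sylv_mscale diagf_mscale dvec_mscale vec_eq_iff mscale_entry algebra_simps)

lemma scaleR_mscale: "r *\<^sub>R (X::complex^'v::finite^'v) = mscale (of_real r) X"
  unfolding vec_eq_iff
proof (intro allI)
  fix i j
  have "(r *\<^sub>R X) $ i $ j = r *\<^sub>R (X $ i $ j)" by simp
  also have "\<dots> = of_real r * X $ i $ j" by (simp add: scaleR_conv_of_real)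
  finally show "(r *\<^sub>R X) $ i $ j = mscale (of_real r) X $ i $ j" by (simp add: mscale_entry)
qed

lemma sylv_linear: "linear (sylv H E c)"
  by (rule linearI) (simp_all add: sylv_add scaleR_mscale sylv_mscale)

lemma G_linear: "linear (G H E c)"
  by (rule linearI) (simp_all add: G_add scaleR_mscale G_mscale)

lemma sylv_adj:
  assumes "hermitian H"
  shows "sylv H E c (adj X) = adj (sylv H E c X)"
proof -
  have h: "cnj (H$i$j) = H$j$i" for i j using herm_entry[OF assms] .
  show ?thesis
    by (simp add: vec_eq_iff sylv_entry adj_def h algebra_simps mult.commute)
qed

lemma dvec_adj: "adj (dvec E c q) = dvec E c (\<lambda>v. cnj (q v))"
  by (auto simp: vec_eq_iff dvec_entry adj_def)

lemma diagf_adj: "diagf (adj X) = (\<lambda>v. cnj (diagf X v))"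
  by (simp add: diagf_def adj_def)

lemma G_adj:
  assumes "hermitian H"
  shows "G H E c (adj X) = adj (G H E c X)"
  by (simp add: G_def sylv_adj[OF assms] diagf_adj dvec_adj adj_add)

lemma trace_sylv: "trace (sylv H E c X) = - (\<Sum>v\<in>UNIV. of_real (gam E c v) * X$v$v)"
proof -
  have sw: "(\<Sum>i\<in>UNIV. \<Sum>k\<in>UNIV. H$i$k * X$k$i) = (\<Sum>i\<in>UNIV. \<Sum>k\<in>UNIV. X$i$k * H$k$i)"
    by (subst sum.swap) (simp add: mult.commute)
  show ?thesis
    unfolding trace_def sylv_entry
    by (simp add: sum_subtractf sum.distrib sw algebra_simps sum_divide_distrib[symmetric] flip: sum_distrib_left)
qed

lemma trace_dvec: "trace (dvec E c q) = (\<Sum>v\<in>UNIV. of_real (gam E c v) * q v)"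
  for E :: "('v::finite \<times> 'v) set"
proof -
  have "trace (dvec E c q) = (\<Sum>i\<in>UNIV. \<Sum>e\<in>{e\<in>E. snd e = i}. of_real ((cmod (c e))^2) * q (fst e))"
    by (simp add: trace_def dvec_entry)
  also have "\<dots> = (\<Sum>e\<in>E. of_real ((cmod (c e))^2) * q (fst e))"
    by (rule sum.group) auto
  also have "\<dots> = (\<Sum>v\<in>UNIV. \<Sum>e\<in>{e\<in>E. fst e = v}. of_real ((cmod (c e))^2) * q (fst e))"
    by (rule sum.group[symmetric]) auto
  also have "\<dots> = (\<Sum>v\<in>UNIV. \<Sum>e\<in>{e\<in>E. fst e = v}. of_real ((cmod (c e))^2) * q v)"
    by (intro sum.cong) auto
  also have "\<dots> = (\<Sum>v\<in>UNIV. of_real (gam E c v) * q v)"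
    by (simp add: gam_def sum_distrib_right del: of_real_power)
  finally show ?thesis .
qed

lemma trace_G: "trace (G H E c X) = 0"
  by (simp add: G_def trace_add trace_sylv trace_dvec diagf_def)


lemma real_Im0: "cnj z = z \<Longrightarrow> Im z = 0"
  by (metis cnj.simps(2) neg_equal_zero)

lemma qf_expand: "qf A y = (\<Sum>i\<in>UNIV. cnj (y$i) * (\<Sum>k\<in>UNIV. A$i$k * y$k))"
  by (simp add: qf_def cinner_def matrix_vector_mult_def)

lemma sylv_inj:
  assumes hH: "hermitian H" and gpos: "\<forall>v. gam E c v > 0" and z: "sylv H E c X = 0"
  shows "X = 0"
proof -
  define S1 where "S1 = (\<Sum>i\<in>UNIV. \<Sum>j\<in>UNIV. cnj (X$i$j) * (\<Sum>k\<in>UNIV. H$i$k * X$k$j))"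
  define S2 where "S2 = (\<Sum>i\<in>UNIV. \<Sum>j\<in>UNIV. cnj (X$i$j) * (\<Sum>k\<in>UNIV. X$i$k * H$k$j))"
  define R where "R = (\<Sum>i\<in>UNIV. \<Sum>j\<in>UNIV. ((gam E c i + gam E c j)/2) * (cmod (X$i$j))^2)"
  have tm: "cnj x * (-\<i> * (a - b) - (of_real gi + of_real gj)/2 * x)
     = -\<i> * (cnj x * a) - (-\<i> * (cnj x * b)) - of_real ((gi + gj)/2 * (cmod x)^2)" for x a b gi gj
  proof -
    have e: "x * cnj x = (of_real (cmod x))^2" using complex_norm_square[of x] by simp
    show ?thesis by (simp add: algebra_simps e[symmetric])
  qed
  have T: "(\<Sum>i\<in>UNIV. \<Sum>j\<in>UNIV. cnj (X$i$j) * sylv H E c X $ i $ j) = -\<i> * S1 - (-\<i> * S2) - of_real R"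
    unfolding sylv_entry tm S1_def S2_def R_def
    by (simp add: sum_subtractf sum_distrib_left of_real_sum)
  have L0: "(\<Sum>i\<in>UNIV. \<Sum>j\<in>UNIV. cnj (X$i$j) * sylv H E c X $ i $ j) = 0" using z by simp
  have S1q: "S1 = (\<Sum>j\<in>UNIV. qf H (\<chi> i. X$i$j))"
    unfolding S1_def qf_expand by (subst sum.swap) simp
  have hT: "hermitian (\<chi> i j. H$j$i)"
    using herm_entry[OF hH] by (simp add: hermitian_def adj_def vec_eq_iff)
  have S2q: "S2 = (\<Sum>i\<in>UNIV. qf (\<chi> i j. H$j$i) (\<chi> j. X$i$j))"
    unfolding S2_def qf_expand by (simp add: mult.commute)
  have "Im S1 = 0" unfolding S1q Im_sum using real_Im0[OF qf_herm_real[OF hH]] by simp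
  moreover have "Im S2 = 0" unfolding S2q Im_sum using real_Im0[OF qf_herm_real[OF hT]] by simp
  ultimately have "Re (-\<i> * S1 - (-\<i> * S2)) = 0" by simp
  moreover have "Re (-\<i> * S1 - (-\<i> * S2) - of_real R) = 0" using T L0 by simp
  ultimately have R0: "R = 0" by simp
  have nn: "\<forall>i j. 0 \<le> ((gam E c i + gam E c j)/2) * (cmod (X$i$j))^2"
    using gpos by (simp add: less_imp_le)
  have "\<forall>i\<in>UNIV. (\<Sum>j\<in>UNIV. ((gam E c i + gam E c j)/2) * (cmod (X$i$j))^2) = 0"
  proof -
    have nn': "0 \<le> (gam E c i + gam E c j) * (cmod (X$i$j))^2" for i j
      using gpos by (simp add: add_nonneg_nonneg less_imp_le)
    show ?thesis
      using R0 unfolding R_def by (subst sum_nonneg_eq_0_iff[symmetric]) (auto intro!: sum_nonneg simp: nn')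
  qed
  then have "\<forall>i j. ((gam E c i + gam E c j)/2) * (cmod (X$i$j))^2 = 0"
    using nn by (simp add: sum_nonneg_eq_0_iff)
  have "X$i$j = 0" for i j
  proof -
    have "(gam E c i + gam E c j)/2 > 0" using gpos by (simp add: add_pos_pos)
    moreover have "((gam E c i + gam E c j)/2) * (cmod (X$i$j))^2 = 0"
      using \<open>\<forall>i j. ((gam E c i + gam E c j)/2) * (cmod (X$i$j))^2 = 0\<close> by blast
    ultimately show ?thesis by simp
  qed
  then show ?thesis by (simp add: vec_eq_iff)
qed

lemma Gam_mv: "(Gam E c *v x) $ i = of_real (gam E c i) * x $ i"
  by (simp add: Gam_def matrix_vector_mult_def)

lemma cinner_Gam: "cinner x (Gam E c *v x) = of_real (\<Sum>i\<in>UNIV. gam E c i * (cmod (x$i))^2)"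
  unfolding cinner_def Gam_mv of_real_sum
  by (rule sum.cong) (simp_all add: complex_norm_square mult_ac del: of_real_power)

lemma sylv_eig:
  assumes hX: "hermitian X" and eig: "X *v x = of_real \<mu> *s x"
  shows "qf (sylv H E c X) x = - of_real \<mu> * cinner x (Gam E c *v x)"
proof -
  have a: "cinner x (X *v y) = of_real \<mu> * cinner x y" for y
    using cinner_herm[OF hX, of x y] eig by (simp add: cinner_scale_left)
  show ?thesis
    by (simp add: qf_def sylv_def matrix_vector_mult_diff_rdistrib mscale_mv commutator_mv anticommutator_mv
        cinner_diff_right cinner_scale_right cinner_add_right a eig mv_scale algebra_simps)
qed

lemma qf_uminus: "qf (- A) x = - qf A x"
proof -
  have "(- A) *v x = - (A *v x)" by (simp add: vec_eq_iff matrix_vector_mult_def sum_negf)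
  then show ?thesis by (simp add: qf_def cinner_minus_right)
qed

lemma psd_of_sylv:
  assumes hH: "hermitian H" and gpos: "\<forall>v. gam E c v > 0" and hX: "hermitian X"
    and pQ: "positive_semidef Q" and eq: "sylv H E c X + Q = 0"
  shows "positive_semidef X"
proof (rule ccontr)
  assume "\<not> positive_semidef X"
  then obtain x \<mu> where x: "x \<noteq> 0" "\<mu> < 0" "X *v x = of_real \<mu> *s x"
    using min_eig[OF hX] by blast
  have Q: "Q = - sylv H E c X" using eq by (simp add: eq_neg_iff_add_eq_0 add.commute)
  have "qf Q x = of_real \<mu> * of_real (\<Sum>i\<in>UNIV. gam E c i * (cmod (x$i))^2)"
    unfolding Q qf_uminus sylv_eig[OF hX x(3)] cinner_Gam by simp
  moreover have "(\<Sum>i\<in>UNIV. gam E c i * (cmod (x$i))^2) > 0"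
  proof -
    obtain i where "x$i \<noteq> 0" using x(1) by (auto simp: vec_eq_iff)
    then have "gam E c i * (cmod (x$i))^2 > 0" using gpos by simp
    moreover have "\<forall>j\<in>UNIV. gam E c j * (cmod (x$j))^2 \<ge> 0" using gpos by (simp add: less_imp_le)
    ultimately show ?thesis by (intro sum_pos2[where i=i]) auto
  qed
  ultimately have "Re (qf Q x) < 0" using x(2) by (simp add: mult_neg_pos)
  then show False using pQ psd_iff by (metis not_le)
qed

lemma dvec_mv: "(dvec E c q *v x) $ i = (\<Sum>e\<in>{e\<in>E. snd e = i}. of_real ((cmod (c e))^2) * q (fst e)) * x $ i"
  by (simp add: dvec_entry matrix_vector_mult_def)

lemma dvec_psd:
  assumes "\<forall>v. q v = of_real (Re (q v)) \<and> Re (q v) \<ge> 0"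
  shows "positive_semidef (dvec E c q)"
proof -
  have "cnj (q v) = q v" for v
  proof -
    obtain t where "q v = of_real t" using assms by blast
    then show ?thesis by simp
  qed
  then have cq: "(\<lambda>v. cnj (q v)) = q" by (rule ext)
  have h: "hermitian (dvec E c q)" unfolding hermitian_def dvec_adj cq ..
  define r where "r i = (\<Sum>e\<in>{e\<in>E. snd e = i}. (cmod (c e))^2 * Re (q (fst e)))" for i
  have r0: "r i \<ge> 0" for i unfolding r_def using assms by (intro sum_nonneg) simp
  have dr: "(\<Sum>e\<in>{e\<in>E. snd e = i}. of_real ((cmod (c e))^2) * q (fst e)) = of_real (r i)" for i
    unfolding r_def of_real_sum by (rule sum.cong) (use assms in \<open>auto simp del: of_real_power\<close>)
  have "qf (dvec E c q) x = of_real (\<Sum>i\<in>UNIV. r i * (cmod (x$i))^2)" for x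
    unfolding qf_def cinner_def dvec_mv dr of_real_sum
    by (rule sum.cong) (simp_all add: complex_norm_square mult_ac del: of_real_power)
  then show ?thesis unfolding psd_iff using h r0 by (simp add: sum_nonneg)
qed


lemma qf_dvec:
  assumes "\<forall>v. q v = of_real (Re (q v))"
  shows "qf (dvec E c q) x = of_real (\<Sum>i\<in>UNIV. (\<Sum>e\<in>{e\<in>E. snd e = i}. (cmod (c e))^2 * Re (q (fst e))) * (cmod (x$i))^2)"
    and "dvec E c q $ i $ i = of_real (\<Sum>e\<in>{e\<in>E. snd e = i}. (cmod (c e))^2 * Re (q (fst e)))"
proof -
  define r where "r i = (\<Sum>e\<in>{e\<in>E. snd e = i}. (cmod (c e))^2 * Re (q (fst e)))" for i
  have dr: "(\<Sum>e\<in>{e\<in>E. snd e = i}. of_real ((cmod (c e))^2) * q (fst e)) = of_real (r i)" for i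
    unfolding r_def of_real_sum by (rule sum.cong) (use assms in \<open>auto simp del: of_real_power\<close>)
  have "qf (dvec E c q) x = of_real (\<Sum>i\<in>UNIV. r i * (cmod (x$i))^2)"
    unfolding qf_def cinner_def dvec_mv dr of_real_sum
    by (rule sum.cong) (simp_all add: complex_norm_square mult_ac del: of_real_power)
  then show "qf (dvec E c q) x = of_real (\<Sum>i\<in>UNIV. (\<Sum>e\<in>{e\<in>E. snd e = i}. (cmod (c e))^2 * Re (q (fst e))) * (cmod (x$i))^2)"
    unfolding r_def .
  show "dvec E c q $ i $ i = of_real (\<Sum>e\<in>{e\<in>E. snd e = i}. (cmod (c e))^2 * Re (q (fst e)))"
    using dr[of i] unfolding r_def by (simp add: dvec_entry)
qed

lemma diagf_psd: "positive_semidef \<rho> \<Longrightarrow> \<forall>v. diagf \<rho> v = of_real (Re (diagf \<rho> v)) \<and> Re (diagf \<rho> v) \<ge> 0"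
  unfolding diagf_def using psd_diag[of \<rho>] by blast

lemma gam_pos:
  fixes E :: "('v::finite \<times> 'v) set"
  assumes sc: "strongly_connected E" and cnz: "\<forall>e\<in>E. c e \<noteq> 0" and two: "a \<noteq> (b::'v::finite)"
  shows "gam E c v > 0"
proof -
  have "\<exists>w. w \<noteq> v" using two by (cases "a = v") auto
  then obtain w where w: "w \<noteq> v" by blast
  have "(v, w) \<in> E\<^sup>*" using sc unfolding strongly_connected_def by blast
  then obtain y where y: "(v, y) \<in> E" using w by (metis converse_rtranclE)
  have "(cmod (c (v, y)))^2 > 0" using cnz y by simp
  then show ?thesis unfolding gam_def
    using y by (intro sum_pos2[where i="(v,y)"]) auto
qed

lemma pred_exists:
  fixes E :: "('v::finite \<times> 'v) set"
  assumes sc: "strongly_connected E" and two: "a \<noteq> (b::'v::finite)"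
  obtains u where "(u, i) \<in> E"
proof -
  have "\<exists>j. j \<noteq> i" using two by (cases "a = i") auto
  then obtain j where j: "j \<noteq> i" by blast
  have "(j, i) \<in> E\<^sup>*" using sc unfolding strongly_connected_def by blast
  then show ?thesis using j that by (metis rtranclE)
qed

lemma dz:
  assumes p: "positive_semidef \<rho>" and d: "dvec E c (diagf \<rho>) $ v $ v = 0" and e: "(u, v) \<in> E" and cz: "c (u, v) \<noteq> 0"
  shows "\<rho> $ u $ u = 0"
proof -
  have dp: "\<forall>v. diagf \<rho> v = of_real (Re (diagf \<rho> v)) \<and> Re (diagf \<rho> v) \<ge> 0" using diagf_psd[OF p] .
  have dpr: "\<forall>v. diagf \<rho> v = of_real (Re (diagf \<rho> v))" using dp by blast
  have "of_real (\<Sum>e\<in>{e\<in>E. snd e = v}. (cmod (c e))^2 * Re (diagf \<rho> (fst e))) = (0::complex)"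
    using d unfolding qf_dvec(2)[OF dpr] .
  then have "(\<Sum>e\<in>{e\<in>E. snd e = v}. (cmod (c e))^2 * Re (diagf \<rho> (fst e))) = 0"
    by (simp only: of_real_eq_0_iff)
  moreover have "(\<Sum>e\<in>{e\<in>E. snd e = v}. (cmod (c e))^2 * Re (diagf \<rho> (fst e))) = 0
     \<longleftrightarrow> (\<forall>e\<in>{e\<in>E. snd e = v}. (cmod (c e))^2 * Re (diagf \<rho> (fst e)) = 0)"
    by (rule sum_nonneg_eq_0_iff) (use dp in auto)
  ultimately have "\<forall>e\<in>{e\<in>E. snd e = v}. (cmod (c e))^2 * Re (diagf \<rho> (fst e)) = 0"
    by blast
  moreover have "(u, v) \<in> {e\<in>E. snd e = v}" using e by simp
  ultimately have "(cmod (c (u,v)))^2 * Re (diagf \<rho> (fst (u, v))) = 0" by blast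
  then have "Re (diagf \<rho> u) = 0" using cz by simp
  moreover have "diagf \<rho> u = of_real (Re (diagf \<rho> u))" using dp by blast
  ultimately show ?thesis by (simp add: diagf_def)
qed

lemma stat_vv:
  assumes p: "positive_semidef \<rho>" and g: "G H E c \<rho> = 0" and z: "\<rho> $ v $ v = 0"
  shows "dvec E c (diagf \<rho>) $ v $ v = 0"
proof -
  have c1: "\<rho> $ k $ v = 0" "\<rho> $ v $ k = 0" for k using psd_diag_zero[OF p z] by auto
  have "sylv H E c \<rho> $ v $ v = 0" by (simp add: sylv_entry c1 z)
  moreover have "(sylv H E c \<rho> + dvec E c (diagf \<rho>)) $ v $ v = 0" using g by (simp add: G_def)
  ultimately show ?thesis by simp
qed

lemma reach:
  assumes p: "positive_semidef \<rho>" and g: "G H E c \<rho> = 0" and cnz: "\<forall>e\<in>E. c e \<noteq> 0"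
    and r: "(u, v) \<in> E\<^sup>*"
  shows "\<rho> $ v $ v = 0 \<Longrightarrow> \<rho> $ u $ u = 0"
  using r
proof (induction rule: converse_rtrancl_induct)
  case base then show ?case .
next
  case (step y z)
  then have "\<rho> $ z $ z = 0" by blast
  then show ?case using dz[OF p stat_vv[OF p g] step(1)] cnz step(1) by blast
qed

lemma allzero:
  assumes sc: "strongly_connected E" and p: "positive_semidef \<rho>" and g: "G H E c \<rho> = 0"
    and cnz: "\<forall>e\<in>E. c e \<noteq> 0" and z: "\<rho> $ v $ v = 0"
  shows "\<rho> = 0"
proof -
  have "\<rho> $ u $ u = 0" for u
  proof -
    have "(u, v) \<in> E\<^sup>*" using sc unfolding strongly_connected_def by blast
    then show ?thesis using reach[OF p g cnz _ z] by blast
  qed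
  then show ?thesis using psd_zero_diag[OF p] by blast
qed

lemma G_inj:
  fixes E :: "('v::finite \<times> 'v) set"
  assumes sc: "strongly_connected E" and cnz: "\<forall>e\<in>E. c e \<noteq> 0" and two: "a \<noteq> (b::'v::finite)"
    and hH: "hermitian H"
    and p: "positive_semidef \<rho>" and g: "G H E c \<rho> = 0" and nz: "\<rho> \<noteq> 0" and x: "\<rho> *v x = 0"
  shows "x = 0"
proof (rule ccontr)
  assume "x \<noteq> 0"
  then obtain i where xi: "x $ i \<noteq> 0" by (auto simp: vec_eq_iff)
  have hr: "hermitian \<rho>" using p psd_iff by auto
  have a: "cinner x (\<rho> *v y) = 0" for y using cinner_herm[OF hr, of x y] x by simp
  have "qf (sylv H E c \<rho>) x = 0"
    by (simp add: qf_def sylv_def matrix_vector_mult_diff_rdistrib mscale_mv commutator_mv anticommutator_mv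
        cinner_diff_right cinner_scale_right cinner_add_right a x)
  moreover have "qf (G H E c \<rho>) x = 0" using g by (simp add: qf_def)
  ultimately have "qf (dvec E c (diagf \<rho>)) x = 0"
    by (simp add: G_def qf_def matrix_vector_mult_add_rdistrib cinner_add_right)
  define r where "r i = (\<Sum>e\<in>{e\<in>E. snd e = i}. (cmod (c e))^2 * Re (diagf \<rho> (fst e)))" for i
  have dp: "\<forall>v. diagf \<rho> v = of_real (Re (diagf \<rho> v)) \<and> Re (diagf \<rho> v) \<ge> 0" using diagf_psd[OF p] .
  have r0: "r j \<ge> 0" for j unfolding r_def using dp by (intro sum_nonneg) simp
  have dpr: "\<forall>v. diagf \<rho> v = of_real (Re (diagf \<rho> v))" using dp by blast
  have "of_real (\<Sum>j\<in>UNIV. r j * (cmod (x$j))^2) = (0::complex)"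
    using \<open>qf (dvec E c (diagf \<rho>)) x = 0\<close> unfolding qf_dvec(1)[OF dpr] r_def .
  then have "(\<Sum>j\<in>UNIV. r j * (cmod (x$j))^2) = 0" by (simp only: of_real_eq_0_iff)
  then have "\<forall>j\<in>UNIV. r j * (cmod (x$j))^2 = 0" using r0 by (simp add: sum_nonneg_eq_0_iff)
  then have "r i * (cmod (x$i))^2 = 0" by blast
  then have "r i = 0" using xi by simp
  then have d0: "dvec E c (diagf \<rho>) $ i $ i = 0" unfolding qf_dvec(2)[OF dpr] r_def[symmetric] by simp
  obtain u where u: "(u, i) \<in> E" using pred_exists[OF sc two] by blast
  have "\<rho> $ u $ u = 0" using dz[OF p d0 u] cnz u by blast
  then have "\<rho> = 0" using allzero[OF sc p g cnz] by blast
  then show False using nz by simp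
qed

lemma rank_full:
  fixes A :: "complex^'v::finite^'v"
  assumes "\<forall>x. A *v x = 0 \<longrightarrow> x = 0"
  shows "rank A = CARD('v)"
proof -
  have "\<exists>B. B ** A = mat 1" using assms matrix_left_invertible_ker by blast
  then have "vec.span (rows A) = UNIV" using matrix_left_invertible_span_rows_gen by blast
  then have "vec.dim (rows A) = vec.dim (UNIV :: (complex^'v) set)" using vec.dim_span[of "rows A"] by simp
  then show ?thesis by (simp add: row_rank_def_gen vec_dim_card card_cart_basis)
qed


lemma trace_mscale: "trace (mscale a A) = a * trace A"
  by (simp add: trace_def mscale_entry sum_distrib_left)

lemma qf_mscale: "qf (mscale a A) x = a * qf A x"
  by (simp add: qf_def mscale_mv cinner_scale_right)

lemma mscale_zero[simp]: "mscale a 0 = 0"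
  by (simp add: mscale_def vec_eq_iff)

lemma mscale_one: "mscale 1 A = A"
  by (simp add: mscale_def vec_eq_iff)

lemma adj_uminus: "adj (- A) = - adj A"
  by (simp add: adj_def vec_eq_iff)

lemma psd_mscale:
  assumes "positive_semidef A" "r \<ge> 0"
  shows "positive_semidef (mscale (of_real r) A)"
proof -
  have h: "hermitian A" and nn: "\<And>x. 0 \<le> Re (qf A x)" using assms(1) psd_iff by auto
  have "hermitian (mscale (of_real r) A)" using h by (simp add: hermitian_def adj_mscale)
  moreover have "0 \<le> Re (qf (mscale (of_real r) A) x)" for x
    using nn[of x] assms(2) by (simp add: qf_mscale)
  ultimately show ?thesis by (simp add: psd_iff)
qed

lemma trace_nz: "trace A = 1 \<Longrightarrow> A \<noteq> 0"
  by (auto simp: trace_def)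

lemma G_of_gksl: "gksl H E (\<lambda>(v, w). mscale (c (v, w)) (ketbra w v)) X = G H E c X"
  for E :: "('v::finite \<times> 'v) set"
  by (simp add: gksl_decomp G_def)

lemma uniq:
  fixes E :: "('v::finite \<times> 'v) set"
  assumes sc: "strongly_connected E" and cnz: "\<forall>e\<in>E. c e \<noteq> 0" and two: "a \<noteq> (b::'v)"
    and hH: "hermitian H"
    and d1: "density_matrix \<rho>1" and g1: "G H E c \<rho>1 = 0"
    and d2: "density_matrix \<rho>2" and g2: "G H E c \<rho>2 = 0"
  shows "\<rho>1 = \<rho>2"
proof -
  have p1: "positive_semidef \<rho>1" and t1: "trace \<rho>1 = 1" using d1 density_matrix_def by auto
  have p2: "positive_semidef \<rho>2" and t2: "trace \<rho>2 = 1" using d2 density_matrix_def by auto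
  have gpos: "\<forall>v. gam E c v > 0" using gam_pos[OF sc cnz two] by blast
  have pos2: "Re (\<rho>2$v$v) > 0" for v
  proof (rule ccontr)
    assume "\<not> Re (\<rho>2$v$v) > 0"
    then have "Re (\<rho>2$v$v) = 0" using psd_diag(2)[OF p2, of v] by simp
    then have "\<rho>2$v$v = 0" using psd_diag(1)[OF p2, of v] by simp
    then have "\<rho>2 = 0" using allzero[OF sc p2 g2 cnz] by blast
    then show False using trace_nz[OF t2] by simp
  qed
  define f where "f v = Re (\<rho>1$v$v) / Re (\<rho>2$v$v)" for v
  define t where "t = Min (range f)"
  have tle: "t \<le> f v" for v unfolding t_def by (rule Min_le) auto
  have "t \<in> range f" unfolding t_def by (rule Min_in) auto
  then obtain v0 where v0: "f v0 = t" by auto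
  define Z where "Z = \<rho>1 - mscale (of_real t) \<rho>2"
  have h1: "hermitian \<rho>1" using p1 psd_iff by auto
  have h2: "hermitian \<rho>2" using p2 psd_iff by auto
  have hZ: "hermitian Z" using h1 h2 by (simp add: Z_def hermitian_def adj_diff adj_mscale)
  have gZ: "G H E c Z = 0" by (simp add: Z_def G_diff G_mscale g1 g2)
  have zd: "Z$v$v = of_real (Re (\<rho>1$v$v) - t * Re (\<rho>2$v$v))" for v
    using psd_diag(1)[OF p1, of v] psd_diag(1)[OF p2, of v]
    by (simp add: Z_def mscale_entry)
  have znn: "Re (\<rho>1$v$v) - t * Re (\<rho>2$v$v) \<ge> 0" for v
    using tle[of v] pos2[of v] unfolding f_def by (simp add: le_divide_eq)
  have z0: "Z$v0$v0 = 0"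
  proof -
    have "Re (\<rho>1$v0$v0) - t * Re (\<rho>2$v0$v0) = 0"
      using v0 pos2[of v0] unfolding f_def by (simp add: field_simps)
    then show ?thesis unfolding zd by simp
  qed
  have dZ: "\<forall>v. diagf Z v = of_real (Re (diagf Z v)) \<and> Re (diagf Z v) \<ge> 0"
    using zd znn by (simp add: diagf_def)
  have "sylv H E c Z + dvec E c (diagf Z) = 0" using gZ by (simp add: G_def)
  then have pZ: "positive_semidef Z" using psd_of_sylv[OF hH gpos hZ dvec_psd[OF dZ]] by blast
  have "Z = 0" using allzero[OF sc pZ gZ cnz z0] .
  then have r1: "\<rho>1 = mscale (of_real t) \<rho>2" by (simp add: Z_def)
  then have "trace \<rho>1 = of_real t * trace \<rho>2" by (simp add: trace_mscale)
  then have "t = 1" using t1 t2 by simp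
  then show ?thesis using r1 by (simp add: mscale_one)
qed


lemma trace_mat1: "trace (mat 1 :: complex^'v::finite^'v) = of_nat CARD('v)"
  by (simp add: trace_def mat_def)

lemma herm_diag_real: "hermitian X \<Longrightarrow> X$v$v = of_real (Re (X$v$v))"
proof -
  assume h: "hermitian X"
  have "Im (X$v$v) = 0" using real_Im0[OF herm_entry[OF h, of v v]] .
  then show ?thesis by (simp add: complex_eq_iff)
qed

lemma kernel_herm:
  fixes E :: "('v::finite \<times> 'v) set"
  assumes hH: "hermitian H"
  obtains X where "hermitian X" "X \<noteq> 0" "G H E c X = 0"
proof -
  have "\<not> inj (G H E c)"
  proof
    assume "inj (G H E c)"
    then have "surj (G H E c)" using linear_injective_imp_surjective[of "G H E c"] G_linear[of H E c] by simp
    then have "mat 1 \<in> range (G H E c)" by simp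
    then obtain X where "G H E c X = mat 1" by auto
    then have "trace (mat 1 :: complex^'v^'v) = 0" using trace_G[of H E c X] by simp
    then show False by (simp add: trace_mat1)
  qed
  then obtain X Y where XY: "X \<noteq> Y" "G H E c X = G H E c Y" unfolding inj_def by blast
  define Z where "Z = X - Y"
  have Z0: "Z \<noteq> 0" using XY Z_def by simp
  have gZ: "G H E c Z = 0" using XY unfolding Z_def G_diff by simp
  define W1 where "W1 = Z + adj Z"
  define W2 where "W2 = mscale \<i> (Z - adj Z)"
  have a0: "G H E c (adj Z) = 0" unfolding G_adj[OF hH] gZ by (simp add: adj_def vec_eq_iff)
  have gW1: "G H E c W1 = 0" by (simp add: W1_def G_add gZ a0)
  have gW2: "G H E c W2 = 0" by (simp add: W2_def G_mscale G_diff gZ a0)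
  have hW1: "hermitian W1" by (simp add: W1_def hermitian_def adj_def vec_eq_iff)
  have "adj W2 = mscale (- \<i>) (adj Z - Z)" by (simp add: W2_def adj_mscale adj_diff adj_adj)
  also have "\<dots> = W2" unfolding W2_def vec_eq_iff mscale_entry by (simp add: right_diff_distrib)
  finally have hW2: "hermitian W2" unfolding hermitian_def .
  have "W1 \<noteq> 0 \<or> W2 \<noteq> 0"
  proof (rule ccontr)
    assume "\<not> (W1 \<noteq> 0 \<or> W2 \<noteq> 0)"
    then have a: "W1 = 0" "W2 = 0" by auto
    have "Z $ i $ j = 0" for i j
    proof -
      have "W1 $ i $ j = 0" using a(1) by simp
      then have e1: "Z$i$j + cnj (Z$j$i) = 0" unfolding W1_def by (simp add: adj_def)
      have "W2 $ i $ j = 0" using a(2) by simp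
      then have "\<i> * (Z$i$j - cnj (Z$j$i)) = 0" unfolding W2_def mscale_entry by (simp add: adj_def)
      then have "Z$i$j = cnj (Z$j$i)" by simp
      then have "Z$i$j + Z$i$j = 0" using e1 by simp
      then show ?thesis by simp
    
    qed
    then show False using Z0 by (simp add: vec_eq_iff)
  qed
  then show ?thesis using that hW1 hW2 gW1 gW2 by blast
qed


lemma sylv_surj:
  assumes hH: "hermitian H" and gpos: "\<forall>v. gam E c v > 0"
  shows "surj (sylv H E c)"
proof -
  have "inj (sylv H E c)"
  proof (rule injI)
    fix X Y assume "sylv H E c X = sylv H E c Y"
    then have "sylv H E c (X - Y) = 0" by (simp add: sylv_diff)
    then have "X - Y = 0" using sylv_inj[OF hH gpos] by blast
    then show "X = Y" by simp
  qed
  then show ?thesis using linear_injective_imp_surjective[of "sylv H E c"] sylv_linear[of H E c] by simp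
qed

lemma normalize:
  assumes p: "positive_semidef W" and nz: "W \<noteq> 0" and g: "G H E c W = 0"
  shows "\<exists>\<rho>. density_matrix \<rho> \<and> G H E c \<rho> = 0"
proof -
  define s where "s = (\<Sum>v\<in>UNIV. Re (W$v$v))"
  have tr: "trace W = of_real s"
    unfolding trace_def s_def of_real_sum by (rule sum.cong) (use psd_diag(1)[OF p] in auto)
  obtain v where v: "W$v$v \<noteq> 0" using psd_zero_diag[OF p] nz by blast
  have "Re (W$v$v) \<noteq> 0" using v psd_diag(1)[OF p, of v] by (metis of_real_0)
  then have "Re (W$v$v) > 0" using psd_diag(2)[OF p, of v] by simp
  then have spos: "s > 0" unfolding s_def using psd_diag(2)[OF p] by (intro sum_pos2[where i=v]) auto
  define \<rho> where "\<rho> = mscale (of_real (1/s)) W"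
  have "positive_semidef \<rho>" unfolding \<rho>_def using psd_mscale[OF p, of "1/s"] spos by simp
  moreover have "trace \<rho> = 1" unfolding \<rho>_def trace_mscale tr using spos
    by (simp add: field_simps)
  moreover have "G H E c \<rho> = 0" unfolding \<rho>_def G_mscale g by simp
  ultimately show ?thesis unfolding density_matrix_def by blast
qed

lemma exist:
  fixes E :: "('v::finite \<times> 'v) set"
  assumes sc: "strongly_connected E" and cnz: "\<forall>e\<in>E. c e \<noteq> 0" and two: "a \<noteq> (b::'v)"
    and hH: "hermitian H"
  shows "\<exists>\<rho>. density_matrix \<rho> \<and> G H E c \<rho> = 0"
proof -
  have gpos: "\<forall>v. gam E c v > 0" using gam_pos[OF sc cnz two] by blast
  obtain X where hX: "hermitian X" and X0: "X \<noteq> 0" and gX: "G H E c X = 0"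
    using kernel_herm[OF hH] by blast
  define p where "p v = Re (X$v$v)" for v
  define pp where "pp v = max (p v) 0" for v
  have dX: "diagf X = (\<lambda>v. of_real (p v))"
    unfolding diagf_def p_def using herm_diag_real[OF hX] by auto
  obtain Y where Y: "sylv H E c Y = - dvec E c (\<lambda>v. of_real (pp v))"
    using sylv_surj[OF hH gpos] by (metis surjD)
  have sX: "sylv H E c X = - dvec E c (\<lambda>v. of_real (p v))"
    using gX unfolding G_def dX by (simp add: eq_neg_iff_add_eq_0)
  have hY: "hermitian Y"
  proof -
    have "sylv H E c (adj Y) = sylv H E c Y"
      unfolding sylv_adj[OF hH] Y adj_uminus dvec_adj by simp
    then have "sylv H E c (adj Y - Y) = 0" by (simp add: sylv_diff)
    then have "adj Y - Y = 0" using sylv_inj[OF hH gpos] by blast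
    then show ?thesis unfolding hermitian_def by simp
  qed
  have dpp: "\<forall>v. (\<lambda>v. complex_of_real (pp v)) v = of_real (Re ((\<lambda>v. complex_of_real (pp v)) v))
                 \<and> Re ((\<lambda>v. complex_of_real (pp v)) v) \<ge> 0"
    by (simp add: pp_def)
  have pY: "positive_semidef Y"
    using psd_of_sylv[OF hH gpos hY dvec_psd[OF dpp]] Y by simp
  define Y' where "Y' = Y - X"
  have hY': "hermitian Y'" using hY hX by (simp add: Y'_def hermitian_def adj_diff)
  have sY': "sylv H E c Y' = - dvec E c (\<lambda>v. of_real (pp v - p v))"
  proof -
    have "dvec E c (\<lambda>v. of_real (pp v - p v)) = dvec E c (\<lambda>v. of_real (pp v)) - dvec E c (\<lambda>v. of_real (p v))"
      using dvec_diff[of E c "\<lambda>v. of_real (pp v)" "\<lambda>v. of_real (p v)"] by simp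
    then show ?thesis unfolding Y'_def sylv_diff Y sX by simp
  qed
  have dq: "\<forall>v. (\<lambda>v. complex_of_real (pp v - p v)) v = of_real (Re ((\<lambda>v. complex_of_real (pp v - p v)) v))
                 \<and> Re ((\<lambda>v. complex_of_real (pp v - p v)) v) \<ge> 0"
    by (simp add: pp_def)
  have pY': "positive_semidef Y'"
    using psd_of_sylv[OF hH gpos hY' dvec_psd[OF dq]] sY' by simp
  define y where "y v = Re (Y$v$v)" for v
  have yd: "Y$v$v = of_real (y v)" for v using psd_diag(1)[OF pY] y_def by simp
  have y0: "y v \<ge> 0" for v using psd_diag(2)[OF pY] y_def by simp
  have ygp: "y v \<ge> p v" for v
    using psd_diag(2)[OF pY', of v] unfolding Y'_def y_def p_def by simp
  have ypp: "y v - pp v \<ge> 0" for v using y0 ygp by (simp add: pp_def)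
  have "trace (sylv H E c Y) = trace (- dvec E c (\<lambda>v. of_real (pp v)))" using Y by simp
  then have "(\<Sum>v\<in>UNIV. of_real (gam E c v) * Y$v$v) = (\<Sum>v\<in>UNIV. of_real (gam E c v) * of_real (pp v))"
  proof -
    have tn: "trace (- A) = - trace A" for A :: "complex^'v^'v" by (simp add: trace_def sum_negf)
    assume "trace (sylv H E c Y) = trace (- dvec E c (\<lambda>v. of_real (pp v)))"
    then show ?thesis unfolding tn trace_sylv trace_dvec by simp
  qed
  then have "(\<Sum>v\<in>UNIV. of_real (gam E c v * y v)) = (\<Sum>v\<in>UNIV. of_real (gam E c v * pp v) :: complex)"
    by (simp add: yd)
  then have "(\<Sum>v\<in>UNIV. gam E c v * y v) = (\<Sum>v\<in>UNIV. gam E c v * pp v)"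
    by (simp only: of_real_sum[symmetric] of_real_eq_iff)
  then have s0: "(\<Sum>v\<in>UNIV. gam E c v * (y v - pp v)) = 0"
    by (simp add: right_diff_distrib sum_subtractf)
  have "(\<Sum>v\<in>UNIV. gam E c v * (y v - pp v)) = 0 \<longleftrightarrow> (\<forall>v\<in>UNIV. gam E c v * (y v - pp v) = 0)"
  proof (rule sum_nonneg_eq_0_iff)
    fix v
    have "gam E c v \<ge> 0" using gpos less_imp_le by blast
    then show "0 \<le> gam E c v * (y v - pp v)" using ypp[of v] by simp
  qed simp
  then have "\<forall>v. gam E c v * (y v - pp v) = 0" using s0 by simp
  then have yeq: "y v = pp v" for v using gpos by (metis less_irrefl mult_eq_0_iff right_minus_eq)
  have dY: "diagf Y = (\<lambda>v. of_real (pp v))" unfolding diagf_def using yd yeq by auto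
  have gY: "G H E c Y = 0" unfolding G_def dY Y by simp
  show ?thesis
  proof (cases "Y = 0")
    case False
    show ?thesis using normalize[OF pY False gY] .
  next
    case True
    have "Y' \<noteq> 0" using X0 True Y'_def by simp
    moreover have "G H E c Y' = 0" unfolding Y'_def G_diff gY gX by simp
    ultimately show ?thesis using normalize[OF pY'] by blast
  qed
qed


lemma one_case:
  fixes E :: "('v::finite \<times> 'v) set"
  assumes all: "\<forall>a b::'v. a = b"
  shows "(\<exists>!\<rho>. density_matrix \<rho> \<and> G H E c \<rho> = 0)
       \<and> (\<forall>\<rho>. density_matrix \<rho> \<and> G H E c \<rho> = 0 \<longrightarrow> rank \<rho> = CARD('v))"
proof -
  obtain x :: 'v where True by blast
  have U: "(UNIV :: 'v set) = {x}" using all by auto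
  have card1: "CARD('v) = 1" by (simp add: U)
  have tr: "trace A = A$x$x" for A :: "complex^'v^'v" by (simp add: trace_def U)
  have ent: "A $ i $ j = A $ x $ x" for A :: "complex^'v^'v" and i j using all by metis
  have m1: "(mat 1 :: complex^'v^'v) $ i $ j = 1" for i j using all by (simp add: mat_def)
  have dm: "density_matrix \<rho> \<Longrightarrow> \<rho> = mat 1" for \<rho> :: "complex^'v^'v"
  proof -
    assume "density_matrix \<rho>"
    then have "\<rho>$x$x = 1" using tr density_matrix_def by metis
    then show "\<rho> = mat 1" using ent[of \<rho>] m1 by (simp add: vec_eq_iff)
  qed
  have d1: "density_matrix (mat 1 :: complex^'v^'v)"
  proof -
    have "hermitian (mat 1 :: complex^'v^'v)" by (simp add: hermitian_def adj_mat1)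
    moreover have "0 \<le> Re (qf (mat 1 :: complex^'v^'v) y)" for y
      by (simp add: qf_def cinner_self sum_nonneg)
    moreover have "trace (mat 1 :: complex^'v^'v) = 1" by (simp add: tr m1)
    ultimately show ?thesis by (simp add: density_matrix_def psd_iff)
  qed
  have E1: "{e\<in>E. snd e = x} = E" "{e\<in>E. fst e = x} = E" using all by auto
  have g1: "G H E c (mat 1) = 0"
  proof -
    have "G H E c (mat 1) $ x $ x = 0"
      unfolding G_def vector_add_component sylv_entry dvec_entry
      by (simp add: U m1 diagf_def gam_def E1 del: of_real_power)
    then show ?thesis using ent[of "G H E c (mat 1)"] by (simp add: vec_eq_iff)
  qed
  have "\<exists>!\<rho>. density_matrix \<rho> \<and> G H E c \<rho> = 0"
    using d1 g1 dm by blast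
  moreover have "rank \<rho> = CARD('v)" if "density_matrix \<rho>" for \<rho> :: "complex^'v^'v"
  proof -
    have "\<rho> = mat 1" using dm that .
    then show ?thesis by (intro rank_full) simp
  qed
  ultimately show ?thesis by blast
qed

theorem theorem1:
  fixes E :: "('v::finite \<times> 'v) set"
    and c :: "'v \<times> 'v \<Rightarrow> complex"
    and H :: "complex^'v^'v"
  assumes "strongly_connected E"
    and "\<forall>e\<in>E. c e \<noteq> 0"
    and "hermitian H"
  shows "(\<exists>!\<rho>. density_matrix \<rho> \<and> gksl H E (\<lambda>(v, w). mscale (c (v, w)) (ketbra w v)) \<rho> = 0)
       \<and> (\<forall>\<rho>. density_matrix \<rho> \<and> gksl H E (\<lambda>(v, w). mscale (c (v, w)) (ketbra w v)) \<rho> = 0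
               \<longrightarrow> rank \<rho> = CARD('v))"
proof -
  have eq: "gksl H E (\<lambda>(v, w). mscale (c (v, w)) (ketbra w v)) \<rho> = G H E c \<rho>" for \<rho>
    by (rule G_of_gksl)
  show ?thesis
proof (cases "\<exists>a b::'v. a \<noteq> b")
  case True
  then obtain a b :: 'v where two: "a \<noteq> b" by blast
  have ex: "\<exists>\<rho>. density_matrix \<rho> \<and> G H E c \<rho> = 0" using exist[OF assms(1,2) two assms(3)] .
  have un: "\<rho>1 = \<rho>2" if "density_matrix \<rho>1" "G H E c \<rho>1 = 0" "density_matrix \<rho>2" "G H E c \<rho>2 = 0"
    for \<rho>1 \<rho>2 using uniq[OF assms(1,2) two assms(3) that] .
  have rk: "rank \<rho> = CARD('v)" if "density_matrix \<rho>" "G H E c \<rho> = 0" for \<rho>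
  proof -
    have p: "positive_semidef \<rho>" and t: "trace \<rho> = 1" using that(1) density_matrix_def by auto
    have "\<forall>x. \<rho> *v x = 0 \<longrightarrow> x = 0"
      using G_inj[OF assms(1,2) two assms(3) p that(2) trace_nz[OF t]] by blast
    then show ?thesis by (rule rank_full)
  qed
  obtain \<rho>0 where r0: "density_matrix \<rho>0 \<and> G H E c \<rho>0 = 0" using ex by blast
  have "\<exists>!\<rho>. density_matrix \<rho> \<and> G H E c \<rho> = 0"
  proof (rule ex1I[of _ \<rho>0])
    show "density_matrix \<rho>0 \<and> G H E c \<rho>0 = 0" using r0 .
    fix \<rho> assume "density_matrix \<rho> \<and> G H E c \<rho> = 0"
    then show "\<rho> = \<rho>0" using un r0 by blast
  qed
  moreover have "\<forall>\<rho>. density_matrix \<rho> \<and> G H E c \<rho> = 0 \<longrightarrow> rank \<rho> = CARD('v)"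
    using rk by blast
  ultimately show ?thesis unfolding eq by (rule conjI)
next
  case False
  then have "\<forall>a b::'v. a = b" by blast
  then show ?thesis unfolding eq by (rule one_case)
qed
qed


end
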